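(* Let $0\le\sigma<1$ and $f\colon[0,1]\to\mathbb R$, and put $f_\sigma(x)=f(x)/x^\sigma$. Assume that the Riemann sums $R_{f_\sigma}(\ell)=\frac1\ell\sum_{k=1}^\ell f_\sigma(k/\ell)$ converge to a finite limit $I(f_\sigma)$ as $\ell\to\infty$. Then $$\lim_{n\to\infty}\frac{S_{n,\sigma}(f)}{\sum_{1\le\ell\le n}\ell^{1-2\sigma}}=I(f_\sigma).$$
   Context: $S_{n,\sigma}(f)=\sum_{1\le k\le\ell\le n}\frac{1}{(k\ell)^\sigma}f\big(\frac k\ell\big)$ (quadratic Riemann sum). *)

theory Defs
  imports "HOL-Analysis.Analysis"
begin

definition quad_riemann_sum :: "(real \<Rightarrow> real) \<Rightarrow> real \<Rightarrow> nat \<Rightarrow> real" where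
  "quad_riemann_sum f \<sigma> n =
     (\<Sum>l = 1..n. \<Sum>k = 1..l. f (real k / real l) / (real k * real l) powr \<sigma>)"

definition riemann_sum :: "(real \<Rightarrow> real) \<Rightarrow> nat \<Rightarrow> real" where
  "riemann_sum g l = (1 / real l) * (\<Sum>k = 1..l. g (real k / real l))"

end

theory Submission
  imports Defs
begin

lemma weighted_cesaro:
  fixes a R :: "nat \<Rightarrow> real" and I :: real
  assumes apos: "\<And>l. l \<ge> 1 \<Longrightarrow> a l > 0"
    and Atop: "filterlim (\<lambda>n. \<Sum>l = 1..n. a l) at_top sequentially"
    and RI: "R \<longlonglongrightarrow> I"
  shows "(\<lambda>n. (\<Sum>l = 1..n. a l * R l) / (\<Sum>l = 1..n. a l)) \<longlonglongrightarrow> I"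
proof (rule LIMSEQ_I)
  fix e :: real assume e: "e > 0"
  define A where "A n = (\<Sum>l = 1..n. a l)" for n
  have "e/2 > 0" using e by simp
  from LIMSEQ_D[OF RI this] obtain N where N: "\<And>l. l \<ge> N \<Longrightarrow> norm (R l - I) < e/2" by blast
  define C where "C = (\<Sum>l = 1..N. a l * \<bar>R l - I\<bar>)"
  have C0: "C \<ge> 0" unfolding C_def using apos by (intro sum_nonneg mult_nonneg_nonneg) (auto intro: less_imp_le)
  have ev: "eventually (\<lambda>n. A n \<ge> 2*C/e + 1) sequentially"
    using Atop unfolding A_def filterlim_at_top by blast
  then obtain M where M: "\<And>n. n \<ge> M \<Longrightarrow> A n \<ge> 2*C/e + 1" by (auto simp: eventually_sequentially)
  show "\<exists>no. \<forall>n\<ge>no. norm ((\<Sum>l = 1..n. a l * R l) / (\<Sum>l = 1..n. a l) - I) < e"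
  proof (intro exI allI impI)
    fix n assume n: "n \<ge> max M N"
    have An: "A n \<ge> 2*C/e + 1" using M n by auto
    have "2*C/e \<ge> 0" using C0 e by simp
    hence Apos: "A n > 0" using An by linarith
    have eq: "(\<Sum>l = 1..n. a l * R l) / A n - I = (\<Sum>l = 1..n. a l * (R l - I)) / A n"
      proof -
      have "(\<Sum>l = 1..n. a l * (R l - I)) = (\<Sum>l = 1..n. a l * R l) - A n * I"
      proof -
        have "(\<Sum>l = 1..n. a l * (R l - I)) = (\<Sum>l = 1..n. a l * R l) - (\<Sum>l = 1..n. a l * I)"
          by (simp add: right_diff_distrib sum_subtractf)
        moreover have "(\<Sum>l = 1..n. a l * I) = A n * I" by (simp add: A_def sum_distrib_right)
        ultimately show ?thesis by simp
      qed
      thus ?thesis using Apos by (simp add: diff_divide_distrib)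
    qed
    have split: "{1..n} = {1..N} \<union> {N<..n}" using n by auto
    have "\<bar>\<Sum>l = 1..n. a l * (R l - I)\<bar> \<le> (\<Sum>l = 1..n. a l * \<bar>R l - I\<bar>)"
      by (rule order_trans[OF sum_abs]) (simp add: abs_mult less_imp_le[OF apos])
    also have "\<dots> = C + (\<Sum>l\<in>{N<..n}. a l * \<bar>R l - I\<bar>)"
      unfolding C_def split by (subst sum.union_disjoint) auto
    also have "(\<Sum>l\<in>{N<..n}. a l * \<bar>R l - I\<bar>) \<le> (\<Sum>l\<in>{N<..n}. a l * (e/2))"
      using N apos by (intro sum_mono mult_left_mono) (auto intro: less_imp_le)
    also have "\<dots> \<le> (\<Sum>l=1..n. a l * (e/2))"
      using apos e by (intro sum_mono2) (auto intro: less_imp_le)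
    also have "\<dots> = A n * (e/2)" by (simp add: A_def sum_distrib_right)
    finally have bd: "\<bar>\<Sum>l = 1..n. a l * (R l - I)\<bar> \<le> C + A n * (e/2)" by simp
    have "C < A n * (e/2)"
    proof -
      have "2*C/e < A n" using An by linarith
      hence "2*C < A n * e" using e by (simp add: field_simps)
      thus ?thesis by simp
    qed
    hence "\<bar>\<Sum>l = 1..n. a l * (R l - I)\<bar> < A n * e" using bd by linarith
    hence "\<bar>(\<Sum>l = 1..n. a l * (R l - I)) / A n\<bar> < e"
      using Apos by (simp only: abs_div_pos[OF Apos, symmetric] pos_divide_less_eq[OF Apos]) (simp add: mult.commute)
    thus "norm ((\<Sum>l = 1..n. a l * R l) / (\<Sum>l = 1..n. a l) - I) < e"
      using eq by (simp add: A_def)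
  qed
qed

theorem theorem5p3:
  fixes f :: "real \<Rightarrow> real" and \<sigma> :: real and I :: real
  assumes "0 \<le> \<sigma>" and "\<sigma> < 1"
    and "(\<lambda>l. riemann_sum (\<lambda>x. f x / x powr \<sigma>) l) \<longlonglongrightarrow> I"
  shows "(\<lambda>n. quad_riemann_sum f \<sigma> n / (\<Sum>l = 1..n. real l powr (1 - 2 * \<sigma>))) \<longlonglongrightarrow> I"
proof -
  have inner: "(\<Sum>k = 1..l. f (real k / real l) / (real k * real l) powr \<sigma>)
      = real l powr (1 - 2 * \<sigma>) * riemann_sum (\<lambda>x. f x / x powr \<sigma>) l" if l: "l \<ge> 1" for l
  proof -
    have F1: "real l powr (1 - 2 * \<sigma>) * (1 / real l) = real l powr (- 2 * \<sigma>)"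
      using l by (simp add: powr_diff powr_minus divide_simps)
    have F2: "f (real k / real l) / (real k * real l) powr \<sigma> =
        real l powr (- 2 * \<sigma>) * (f (real k / real l) / (real k / real l) powr \<sigma>)"
      if k: "k \<in> {1..l}" for k
    proof -
      have "(real k * real l) powr \<sigma> = (real k / real l) powr \<sigma> * real l powr (2*\<sigma>)"
      proof -
        have "real l powr (2*\<sigma>) = real l powr \<sigma> * real l powr \<sigma>"
          by (metis mult_2 powr_add)
        moreover have "real l powr \<sigma> > 0" using l by simp
        moreover have "(real k * real l) powr \<sigma> = real k powr \<sigma> * real l powr \<sigma>"
          by (simp add: powr_mult)
        moreover have "(real k / real l) powr \<sigma> = real k powr \<sigma> / real l powr \<sigma>"
          by (simp add: powr_divide)
        ultimately show ?thesis by simp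
      qed
      moreover have "real l powr (- 2 * \<sigma>) * real l powr (2*\<sigma>) = 1"
        using l by (metis powr_add add.left_inverse mult_minus_left powr_zero_eq_one of_nat_0_less_iff less_le_trans zero_less_one less_numeral_extra(3) not_one_le_zero)
      moreover have "(real k / real l) powr \<sigma> > 0" "real l powr (2*\<sigma>) > 0" using k l by auto
      ultimately show ?thesis by (simp add: field_simps)
    qed
    have "(\<Sum>k = 1..l. f (real k / real l) / (real k * real l) powr \<sigma>) =
       (\<Sum>k = 1..l. real l powr (- 2 * \<sigma>) * (f (real k / real l) / (real k / real l) powr \<sigma>))"
      by (rule sum.cong) (simp_all only: F2)
    also have "\<dots> = real l powr (- 2 * \<sigma>) * (\<Sum>k = 1..l. f (real k / real l) / (real k / real l) powr \<sigma>)"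
      by (simp only: sum_distrib_left)
    also have "\<dots> = (real l powr (1 - 2 * \<sigma>) * (1 / real l)) * (\<Sum>k = 1..l. f (real k / real l) / (real k / real l) powr \<sigma>)"
      by (simp only: F1)
    finally show ?thesis unfolding riemann_sum_def by (simp only: mult.assoc)
  qed
  have Q: "quad_riemann_sum f \<sigma> n = (\<Sum>l = 1..n. real l powr (1 - 2 * \<sigma>) * riemann_sum (\<lambda>x. f x / x powr \<sigma>) l)" for n
    unfolding quad_riemann_sum_def by (intro sum.cong refl inner) auto
  have harmle: "harm n \<le> (\<Sum>l = 1..n. real l powr (1 - 2 * \<sigma>))" for n
    unfolding harm_def
  proof (intro sum_mono)
    fix l assume l: "l \<in> {1..n}"
    have "inverse (real l) = real l powr (-1)" using l by (simp add: powr_minus)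
    also have "\<dots> \<le> real l powr (1 - 2 * \<sigma>)" using l assms(2) by (intro powr_mono) auto
    finally show "inverse (of_nat l) \<le> real l powr (1 - 2 * \<sigma>)" by simp
  qed
  have Atop: "filterlim (\<lambda>n. \<Sum>l = 1..n. real l powr (1 - 2 * \<sigma>)) at_top sequentially"
    by (rule filterlim_at_top_mono[OF harm_at_top]) (intro always_eventually allI harmle)
  have apos: "\<And>l. l \<ge> 1 \<Longrightarrow> real l powr (1 - 2 * \<sigma>) > 0" by simp
  show ?thesis unfolding Q by (rule weighted_cesaro[OF apos Atop assms(3)])
qed

end
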